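(* Let $(M,s)$ be a finite pointed epistemic model, $M=(S,R,V)$, and let $\phi$ be a satisfiable formula of $\mathcal{L}$. Suppose that all agents occurring in $\phi$ have non-trivial beliefs in state $s$ of $M$, in the sense that there is a set $S^{ser}\subseteq S$ with $s\in S^{ser}$ such that for each agent $a$ occurring in $\phi$ and each $t\in S^{ser}$ there is $u\in S^{ser}$ with $(t,u)\in R(a)$. Then there is an update $(\mathsf{U},\mathsf{e})$ such that $(M,s)\models\langle\mathsf{U},\mathsf{e}\rangle\phi$.
   Context: Fix a finite set of agents $A$ and countable set of atoms $P$. An epistemic model is $M=(S,R,V)$ with $S$ nonempty, $R:A\to\wp(S\times S)$, $V:P\to\wp(S)$. The language $\mathcal{L}$: $\phi ::= p \mid \neg\phi\mid\phi\wedge\phi\mid[\alpha]\phi$, $\alpha ::= a\mid B^*\mid(\mathsf{U},\mathsf{e})$ ($a\in A$, $B\subseteq A$), with $\langle\alpha\rangle\phi:=\neg[\alpha]\neg\phi$. An update model $\mathsf{U}=(\mathsf{E},\mathsf{R},\mathsf{pre},\mathsf{post})$ has finite nonempty event set $\mathsf{E}$, $\mathsf{R}:A\to\wp(\mathsf{E}\times\mathsf{E})$, $\mathsf{pre}:\mathsf{E}\to\mathcal{L}$ and $\mathsf{post}:\mathsf{E}\to(P\to\mathcal{L})$ with each $\mathsf{post}(\mathsf{e})$ differing from the identity on finitely many atoms; an update is $(\mathsf{U},\mathsf{e})$ with $\mathsf{e}\in\mathsf{E}$. Semantics: atoms via $V$, Booleans as usual, $[a]\phi$ true at $s$ iff $\phi$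 true at all $R(a)$-successors, $[B^*]\phi$ true iff $\phi$ true at all states reachable by the reflexive transitive closure of $\bigcup_{a\in B}R(a)$, and $(M,s)\models[\mathsf{U},\mathsf{e}]\phi$ iff $(M,s)\models\mathsf{pre}(\mathsf{e})$ implies $(M\otimes\mathsf{U},(s,\mathsf{e}))\models\phi$, where $M\otimes\mathsf{U}$ has domain $\{(t,\mathsf{f}) : (M,t)\models\mathsf{pre}(\mathsf{f})\}$, $((t,\mathsf{f}),(u,\mathsf{g}))$ related for $a$ iff $(t,u)\in R(a)$ and $(\mathsf{f},\mathsf{g})\in\mathsf{R}(a)$, and $(t,\mathsf{f})\in V^\otimes(p)$ iff $(M,t)\models\mathsf{post}(\mathsf{f})(p)$. A formula is satisfiable if it is true in some pointed epistemic model. *)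

theory Defs
  imports Main "HOL-Library.Countable"
begin

text \<open>Update models are inlined into the action
  constructor Upd: event set E (events are natural numbers), accessibility
  relations Rl, preconditions pre and postconditions post, plus the designated
  event. Well-formedness (finite nonempty E, designated event in E, etc.) is
  imposed by the predicate wf_fm / wf_act below.\<close>

datatype ('a, 'p) fm =
    Atom 'p
  | Neg "('a, 'p) fm"
  | Conj "('a, 'p) fm" "('a, 'p) fm"
  | Box "('a, 'p) act" "('a, 'p) fm"
and ('a, 'p) act =
    Ag 'a
  | Star "'a set"
  | Upd "nat set" "'a \<Rightarrow> (nat \<times> nat) set" "nat \<Rightarrow> ('a, 'p) fm"
        "nat \<Rightarrow> 'p \<Rightarrow> ('a, 'p) fm" nat

definition Dia :: "('a, 'p) act \<Rightarrow> ('a, 'p) fm \<Rightarrow> ('a, 'p) fm" where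
  "Dia \<alpha> \<phi> = Neg (Box \<alpha> (Neg \<phi>))"

primrec wf_fm :: "('a, 'p) fm \<Rightarrow> bool"
  and wf_act :: "('a, 'p) act \<Rightarrow> bool" where
  "wf_fm (Atom p) = True"
| "wf_fm (Neg \<phi>) = wf_fm \<phi>"
| "wf_fm (Conj \<phi> \<psi>) = (wf_fm \<phi> \<and> wf_fm \<psi>)"
| "wf_fm (Box \<alpha> \<phi>) = (wf_act \<alpha> \<and> wf_fm \<phi>)"
| "wf_act (Ag a) = True"
| "wf_act (Star B) = True"
| "wf_act (Upd E Rl pre post e) =
     (finite E \<and> E \<noteq> {} \<and> e \<in> E \<and> (\<forall>a. Rl a \<subseteq> E \<times> E) \<and>
      (\<forall>f\<in>E. wf_fm (pre f) \<and> finite {p. post f p \<noteq> Atom p} \<and>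
              (\<forall>p. wf_fm (post f p))))"

primrec agents_fm :: "('a, 'p) fm \<Rightarrow> 'a set"
  and agents_act :: "('a, 'p) act \<Rightarrow> 'a set" where
  "agents_fm (Atom p) = {}"
| "agents_fm (Neg \<phi>) = agents_fm \<phi>"
| "agents_fm (Conj \<phi> \<psi>) = agents_fm \<phi> \<union> agents_fm \<psi>"
| "agents_fm (Box \<alpha> \<phi>) = agents_act \<alpha> \<union> agents_fm \<phi>"
| "agents_act (Ag a) = {a}"
| "agents_act (Star B) = B"
| "agents_act (Upd E Rl pre post e) =
     (\<Union>f\<in>E. agents_fm (pre f) \<union> (\<Union>p. agents_fm (post f p)))"

record ('w, 'a, 'p) emodel =
  dom :: "'w set"
  rel :: "'a \<Rightarrow> ('w \<times> 'w) set"
  val :: "'p \<Rightarrow> 'w set"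

definition is_model :: "('w, 'a, 'p) emodel \<Rightarrow> bool" where
  "is_model M \<longleftrightarrow> dom M \<noteq> {} \<and> (\<forall>a. rel M a \<subseteq> dom M \<times> dom M)"

text \<open>To avoid a change of state type at each product update, semantics is
  evaluated on models whose states have the form (x, l) with l a list of
  events; the product state ((x,l), f) is represented as (x, l @ [f]).
  This is an isomorphic copy of the product update.\<close>

definition upd ::
  "('s \<times> nat list, 'a, 'p) emodel \<Rightarrow> nat set \<Rightarrow> ('a \<Rightarrow> (nat \<times> nat) set)
   \<Rightarrow> (nat \<Rightarrow> ('s \<times> nat list, 'a, 'p) emodel \<Rightarrow> 's \<times> nat list \<Rightarrow> bool)
   \<Rightarrow> (nat \<Rightarrow> 'p \<Rightarrow> ('s \<times> nat list, 'a, 'p) emodel \<Rightarrow> 's \<times> nat list \<Rightarrow> bool)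
   \<Rightarrow> ('s \<times> nat list, 'a, 'p) emodel" where
  "upd M E Rl P Q =
     (let D = {(x, l @ [f]) | x l f. (x, l) \<in> dom M \<and> f \<in> E \<and> P f M (x, l)} in
      \<lparr> dom = D,
        rel = (\<lambda>a. {((x, l @ [f]), (y, m @ [g])) | x l f y m g.
                     (x, l @ [f]) \<in> D \<and> (y, m @ [g]) \<in> D \<and>
                     ((x, l), (y, m)) \<in> rel M a \<and> (f, g) \<in> Rl a}),
        val = (\<lambda>p. {(x, l @ [f]) | x l f. (x, l @ [f]) \<in> D \<and> Q f p M (x, l)}) \<rparr>)"

primrec sat :: "('a, 'p) fm \<Rightarrow> ('s \<times> nat list, 'a, 'p) emodel \<Rightarrow> 's \<times> nat list \<Rightarrow> bool"
  and sat_box :: "('a, 'p) act \<Rightarrow> (('s \<times> nat list, 'a, 'p) emodel \<Rightarrow> 's \<times> nat list \<Rightarrow> bool)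
                   \<Rightarrow> ('s \<times> nat list, 'a, 'p) emodel \<Rightarrow> 's \<times> nat list \<Rightarrow> bool" where
  "sat (Atom p) = (\<lambda>M w. w \<in> val M p)"
| "sat (Neg \<phi>) = (\<lambda>M w. \<not> sat \<phi> M w)"
| "sat (Conj \<phi> \<psi>) = (\<lambda>M w. sat \<phi> M w \<and> sat \<psi> M w)"
| "sat (Box \<alpha> \<phi>) = sat_box \<alpha> (sat \<phi>)"
| "sat_box (Ag a) = (\<lambda>k M w. \<forall>v. (w, v) \<in> rel M a \<longrightarrow> k M v)"
| "sat_box (Star B) = (\<lambda>k M w. \<forall>v. (w, v) \<in> (\<Union>a\<in>B. rel M a)\<^sup>* \<longrightarrow> k M v)"
| "sat_box (Upd E Rl pre post e) =
     (\<lambda>k M w. sat (pre e) M w \<longrightarrow>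
        k (upd M E Rl (\<lambda>f. sat (pre f)) (\<lambda>f p. sat (post f p)))
          (fst w, snd w @ [e]))"

definition lift :: "('s, 'a, 'p) emodel \<Rightarrow> ('s \<times> nat list, 'a, 'p) emodel" where
  "lift M = \<lparr> dom = {(x, []) | x. x \<in> dom M},
              rel = (\<lambda>a. {((x, []), (y, [])) | x y. (x, y) \<in> rel M a}),
              val = (\<lambda>p. {(x, []) | x. x \<in> val M p}) \<rparr>"

definition holds :: "('s, 'a, 'p) emodel \<Rightarrow> 's \<Rightarrow> ('a, 'p) fm \<Rightarrow> bool" where
  "holds M s \<phi> = sat \<phi> (lift M) (s, [])"

end

theory Submission
  imports Defs
begin

lemma upd_dom: "(x, m) \<in> dom (upd N E Rl Pr Po) \<longleftrightarrow>
  m \<noteq> [] \<and> (x, butlast m) \<in> dom N \<and> last m \<in> E \<and> Pr (last m) N (x, butlast m)"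
  unfolding upd_def Let_def
  apply auto
  by (metis append_butlast_last_id)

lemma upd_rel: "((x, m), (y, n)) \<in> rel (upd N E Rl Pr Po) a \<longleftrightarrow>
  (x, m) \<in> dom (upd N E Rl Pr Po) \<and> (y, n) \<in> dom (upd N E Rl Pr Po) \<and>
  ((x, butlast m), (y, butlast n)) \<in> rel N a \<and> (last m, last n) \<in> Rl a"
  unfolding upd_dom
  unfolding upd_def Let_def
  apply auto
  by (metis append_butlast_last_id)

lemma upd_val: "(x, m) \<in> val (upd N E Rl Pr Po) p \<longleftrightarrow>
  (x, m) \<in> dom (upd N E Rl Pr Po) \<and> Po (last m) p N (x, butlast m)"
  unfolding upd_dom
  unfolding upd_def Let_def
  apply auto
  by (metis append_butlast_last_id)

lemma upd_rel_dom: "(w, v) \<in> rel (upd N E Rl Pr Po) a \<Longrightarrow> w \<in> dom (upd N E Rl Pr Po) \<and> v \<in> dom (upd N E Rl Pr Po)"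
  by (cases w; cases v) (simp add: upd_rel)

definition gl :: "('s \<times> nat list \<Rightarrow> 't \<times> nat list) \<Rightarrow> 's \<times> nat list \<Rightarrow> 't \<times> nat list" where
  "gl g w = (fst (g (fst w, butlast (snd w))), snd (g (fst w, butlast (snd w))) @ [last (snd w)])"

definition PMOR :: "'a set \<Rightarrow> 'p set \<Rightarrow> ('s \<times> nat list, 'a, 'p) emodel \<Rightarrow> ('t \<times> nat list, 'a, 'p) emodel
   \<Rightarrow> ('s \<times> nat list \<Rightarrow> 't \<times> nat list) \<Rightarrow> bool" where
  "PMOR A P N F g \<longleftrightarrow> (\<forall>w\<in>dom N. g w \<in> dom F) \<and> (\<forall>a\<in>A. rel N a \<subseteq> dom N \<times> dom N)
    \<and> (\<forall>a\<in>A. \<forall>w v. (w, v) \<in> rel N a \<longrightarrow> (g w, g v) \<in> rel F a)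
    \<and> (\<forall>a\<in>A. \<forall>w\<in>dom N. \<forall>z. (g w, z) \<in> rel F a \<longrightarrow> (\<exists>v. (w, v) \<in> rel N a \<and> g v = z))
    \<and> (\<forall>p\<in>P. \<forall>w\<in>dom N. w \<in> val N p \<longleftrightarrow> g w \<in> val F p)"

lemma PMOR_upd:
  assumes pm: "PMOR A P N F g"
    and pre: "\<And>f w. f \<in> E \<Longrightarrow> w \<in> dom N \<Longrightarrow> Pn f N w = Pf f F (g w)"
    and post: "\<And>f w p. f \<in> E \<Longrightarrow> w \<in> dom N \<Longrightarrow> p \<in> P \<Longrightarrow> Qn f p N w = Qf f p F (g w)"
  shows "PMOR A P (upd N E Rl Pn Qn) (upd F E Rl Pf Qf) (gl g)"
  unfolding PMOR_def
proof (intro conjI ballI allI impI)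
  fix w assume w: "w \<in> dom (upd N E Rl Pn Qn)"
  obtain x m where xm: "w = (x, m)" by (cases w)
  from w pm pre[of "last m" "(x, butlast m)"] show "gl g w \<in> dom (upd F E Rl Pf Qf)"
    by (cases "g (x, butlast m)") (auto simp: xm gl_def upd_dom PMOR_def)
next
  fix a assume "a \<in> A"
  show "rel (upd N E Rl Pn Qn) a \<subseteq> dom (upd N E Rl Pn Qn) \<times> dom (upd N E Rl Pn Qn)"
    using upd_rel_dom by fast
next
  fix a w v assume a: "a \<in> A" and wv: "(w, v) \<in> rel (upd N E Rl Pn Qn) a"
  obtain x m where xm: "w = (x, m)" by (cases w)
  obtain y n where yn: "v = (y, n)" by (cases v)
  from wv have R: "((x, butlast m), (y, butlast n)) \<in> rel N a" "(last m, last n) \<in> Rl a"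
    and d: "(x, m) \<in> dom (upd N E Rl Pn Qn)" "(y, n) \<in> dom (upd N E Rl Pn Qn)"
    by (auto simp: xm yn upd_rel)
  from pm a R have R': "(g (x, butlast m), g (y, butlast n)) \<in> rel F a" by (auto simp: PMOR_def)
  from d pm pre[of "last m" "(x, butlast m)"] pre[of "last n" "(y, butlast n)"]
  have d': "gl g w \<in> dom (upd F E Rl Pf Qf)" "gl g v \<in> dom (upd F E Rl Pf Qf)"
    by (cases "g (x, butlast m)"; cases "g (y, butlast n)"; auto simp: xm yn gl_def upd_dom PMOR_def)+
  show "(gl g w, gl g v) \<in> rel (upd F E Rl Pf Qf) a"
    using d' R' R(2)
    by (cases "g (x, butlast m)"; cases "g (y, butlast n)"; simp add: xm yn gl_def upd_rel)
next
  fix a w z assume a: "a \<in> A" and w: "w \<in> dom (upd N E Rl Pn Qn)"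
    and wz: "(gl g w, z) \<in> rel (upd F E Rl Pf Qf) a"
  obtain x m where xm: "w = (x, m)" by (cases w)
  obtain y n where yn: "z = (y, n)" by (cases z)
  obtain x' m' where gx: "g (x, butlast m) = (x', m')" by (cases "g (x, butlast m)")
  from w have wd: "(x, butlast m) \<in> dom N" "m \<noteq> []" "last m \<in> E" by (auto simp: xm upd_dom)
  from wz have R: "((x', m'), (y, butlast n)) \<in> rel F a" "(last m, last n) \<in> Rl a"
    and zd: "(y, n) \<in> dom (upd F E Rl Pf Qf)"
    by (auto simp: xm yn gx gl_def upd_rel)
  from pm a wd R(1) obtain v where v: "((x, butlast m), v) \<in> rel N a" "g v = (y, butlast n)"
    unfolding PMOR_def by (metis gx)
  obtain y0 n0 where vv: "v = (y0, n0)" by (cases v)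
  from pm a v have vd: "v \<in> dom N" unfolding PMOR_def by blast
  from zd have zz: "n \<noteq> []" "last n \<in> E" "Pf (last n) F (y, butlast n)" by (auto simp: upd_dom)
  with pre[of "last n" v] vd v have pv: "Pn (last n) N v" by simp
  let ?v = "(y0, n0 @ [last n])"
  have vd': "?v \<in> dom (upd N E Rl Pn Qn)" using vd pv zz by (simp add: upd_dom vv)
  have "(w, ?v) \<in> rel (upd N E Rl Pn Qn) a"
    using vd' w v R(2) by (simp add: upd_rel xm vv)
  moreover have "gl g ?v = z" using v zz by (simp add: gl_def vv yn)
  ultimately show "\<exists>v. (w, v) \<in> rel (upd N E Rl Pn Qn) a \<and> gl g v = z" by blast
next
  fix p w assume p: "p \<in> P" and w: "w \<in> dom (upd N E Rl Pn Qn)"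
  obtain x m where xm: "w = (x, m)" by (cases w)
  obtain x' m' where gx: "g (x, butlast m) = (x', m')" by (cases "g (x, butlast m)")
  from w have wd: "(x, butlast m) \<in> dom N" "m \<noteq> []" "last m \<in> E" by (auto simp: xm upd_dom)
  have gd: "gl g w \<in> dom (upd F E Rl Pf Qf)"
    using w pm pre[of "last m" "(x, butlast m)"]
    by (auto simp: xm gl_def upd_dom PMOR_def gx)
  show "w \<in> val (upd N E Rl Pn Qn) p \<longleftrightarrow> gl g w \<in> val (upd F E Rl Pf Qf) p"
    using gd w post[of "last m" "(x, butlast m)" p] wd p
    by (auto simp: xm gl_def upd_val gx)
qed


primrec atf :: "('a, 'p) fm \<Rightarrow> 'p set" and ata :: "('a, 'p) act \<Rightarrow> 'p set" where
  "atf (Atom p) = {p}"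
| "atf (Neg \<phi>) = atf \<phi>"
| "atf (Conj \<phi> \<psi>) = atf \<phi> \<union> atf \<psi>"
| "atf (Box \<alpha> \<phi>) = ata \<alpha> \<union> atf \<phi>"
| "ata (Ag a) = {}"
| "ata (Star B) = {}"
| "ata (Upd E Rl pre post e) = (\<Union>f\<in>E. atf (pre f) \<union> (\<Union>p\<in>{p. post f p \<noteq> Atom p}. atf (post f p)))"

lemma star_forth:
  assumes pm: "PMOR A P N F g" and B: "B \<subseteq> A"
  shows "(w, v) \<in> (\<Union>a\<in>B. rel N a)\<^sup>* \<Longrightarrow> w \<in> dom N \<Longrightarrow> v \<in> dom N \<and> (g w, g v) \<in> (\<Union>a\<in>B. rel F a)\<^sup>*"
proof (induction rule: rtrancl_induct)
  case base then show ?case by simp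
next
  case (step y z)
  then obtain a where a: "a \<in> B" "(y, z) \<in> rel N a" by blast
  with pm B have "z \<in> dom N" "(g y, g z) \<in> rel F a" unfolding PMOR_def by blast+
  with step a show ?case by (meson UN_I rtrancl.rtrancl_into_rtrancl)
qed

lemma star_back:
  assumes pm: "PMOR A P N F g" and B: "B \<subseteq> A"
  shows "(g w, z) \<in> (\<Union>a\<in>B. rel F a)\<^sup>* \<Longrightarrow> w \<in> dom N \<Longrightarrow> \<exists>v. v \<in> dom N \<and> (w, v) \<in> (\<Union>a\<in>B. rel N a)\<^sup>* \<and> g v = z"
proof (induction rule: rtrancl_induct)
  case base then show ?case by blast
next
  case (step y z)
  then obtain v where v: "v \<in> dom N" "(w, v) \<in> (\<Union>a\<in>B. rel N a)\<^sup>*" "g v = y" by blast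
  from step obtain a where a: "a \<in> B" "(y, z) \<in> rel F a" by blast
  with pm B v obtain u where u: "(v, u) \<in> rel N a" "g u = z" unfolding PMOR_def by blast
  with pm B a have "u \<in> dom N" unfolding PMOR_def by blast
  with u v a have "(w, u) \<in> (\<Union>a\<in>B. rel N a)\<^sup>*" by (meson UN_I rtrancl.rtrancl_into_rtrancl)
  with u \<open>u \<in> dom N\<close> show ?case by blast
qed

lemma pm_main:
  "(\<forall>N F g. wf_fm \<psi> \<longrightarrow> agents_fm \<psi> \<subseteq> A \<longrightarrow> atf \<psi> \<subseteq> P \<longrightarrow> PMOR A P (N :: ('s \<times> nat list, 'a, 'p) emodel) (F :: ('t \<times> nat list, 'a, 'p) emodel) g
     \<longrightarrow> (\<forall>w\<in>dom N. sat \<psi> N w = sat \<psi> F (g w)))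
  \<and> (\<forall>\<theta>.(\<forall>N F g. wf_fm \<theta> \<longrightarrow> agents_fm \<theta> \<subseteq> A \<longrightarrow> atf \<theta> \<subseteq> P \<longrightarrow> PMOR A P (N :: ('s \<times> nat list, 'a, 'p) emodel) (F :: ('t \<times> nat list, 'a, 'p) emodel) g
     \<longrightarrow> (\<forall>w\<in>dom N. sat \<theta> N w = sat \<theta> F (g w))) \<longrightarrow>
     (\<forall>N F g. wf_fm (Box \<alpha> \<theta>) \<longrightarrow> agents_fm (Box \<alpha> \<theta>) \<subseteq> A \<longrightarrow> atf (Box \<alpha> \<theta>) \<subseteq> P \<longrightarrow> PMOR A P (N :: ('s \<times> nat list, 'a, 'p) emodel) (F :: ('t \<times> nat list, 'a, 'p) emodel) g
     \<longrightarrow> (\<forall>w\<in>dom N. sat (Box \<alpha> \<theta>) N w = sat (Box \<alpha> \<theta>) F (g w))))"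
proof (induct rule: fm_act.induct[where ?P1.0 = "\<lambda>\<psi>. (\<forall>N F g. wf_fm \<psi> \<longrightarrow> agents_fm \<psi> \<subseteq> A \<longrightarrow> atf \<psi> \<subseteq> P \<longrightarrow> PMOR A P (N :: ('s \<times> nat list, 'a, 'p) emodel) (F :: ('t \<times> nat list, 'a, 'p) emodel) g
     \<longrightarrow> (\<forall>w\<in>dom N. sat \<psi> N w = sat \<psi> F (g w)))" and ?P2.0 = "\<lambda>\<alpha>. (\<forall>\<theta>.(\<forall>N F g. wf_fm \<theta> \<longrightarrow> agents_fm \<theta> \<subseteq> A \<longrightarrow> atf \<theta> \<subseteq> P \<longrightarrow> PMOR A P (N :: ('s \<times> nat list, 'a, 'p) emodel) (F :: ('t \<times> nat list, 'a, 'p) emodel) g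
     \<longrightarrow> (\<forall>w\<in>dom N. sat \<theta> N w = sat \<theta> F (g w))) \<longrightarrow>
     (\<forall>N F g. wf_fm (Box \<alpha> \<theta>) \<longrightarrow> agents_fm (Box \<alpha> \<theta>) \<subseteq> A \<longrightarrow> atf (Box \<alpha> \<theta>) \<subseteq> P \<longrightarrow> PMOR A P (N :: ('s \<times> nat list, 'a, 'p) emodel) (F :: ('t \<times> nat list, 'a, 'p) emodel) g
     \<longrightarrow> (\<forall>w\<in>dom N. sat (Box \<alpha> \<theta>) N w = sat (Box \<alpha> \<theta>) F (g w))))"])
  case (Atom x)
  then show ?case by (auto simp: PMOR_def)
next
  case (Neg x)
  then show ?case by auto
next
  case (Conj x1 x2)
  then show ?case by auto
next
  case (Box x1 x2)
  then show ?case by blast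
next
  case (Ag a)
  show ?case
  proof (intro allI impI ballI)
    fix \<theta> and N :: "('s \<times> nat list, 'a, 'p) emodel" and F :: "('t \<times> nat list, 'a, 'p) emodel" and g w
    assume IH: "\<forall>N F g. wf_fm \<theta> \<longrightarrow> agents_fm \<theta> \<subseteq> A \<longrightarrow> atf \<theta> \<subseteq> P \<longrightarrow> PMOR A P (N :: ('s \<times> nat list, 'a, 'p) emodel) (F :: ('t \<times> nat list, 'a, 'p) emodel) g
     \<longrightarrow> (\<forall>w\<in>dom N. sat \<theta> N w = sat \<theta> F (g w))"
      and h: "wf_fm (Box (Ag a) \<theta>)" "agents_fm (Box (Ag a) \<theta>) \<subseteq> A" "atf (Box (Ag a) \<theta>) \<subseteq> P"
        "PMOR A P N F g" and w: "w \<in> dom N"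
    have a: "a \<in> A" using h by simp
    have IH0: "\<forall>v\<in>dom N. sat \<theta> N v = sat \<theta> F (g v)" using IH[rule_format, of N F g] h by simp
    then have IH': "\<And>v. v \<in> dom N \<Longrightarrow> sat \<theta> N v = sat \<theta> F (g v)" by blast
    show "sat (Box (Ag a) \<theta>) N w = sat (Box (Ag a) \<theta>) F (g w)"
    proof
      assume L: "sat (Box (Ag a) \<theta>) N w"
      show "sat (Box (Ag a) \<theta>) F (g w)"
      proof (simp, intro allI impI)
        fix z assume "(g w, z) \<in> rel F a"
        with h(4) a w obtain v where "(w, v) \<in> rel N a" "g v = z" unfolding PMOR_def by blast
        moreover with h(4) a have "v \<in> dom N" unfolding PMOR_def by blast
        ultimately show "sat \<theta> F z" using L IH'[of v] by (cases v) auto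
      qed
    next
      assume R: "sat (Box (Ag a) \<theta>) F (g w)"
      show "sat (Box (Ag a) \<theta>) N w"
      proof (simp, intro allI impI)
        fix v assume v: "(w, v) \<in> rel N a"
        with h(4) a have "v \<in> dom N" "(g w, g v) \<in> rel F a" unfolding PMOR_def by blast+
        then show "sat \<theta> N v" using R IH'[of v] by (cases "g v") auto
      qed
    qed
  qed
next
  case (Star B)
  show ?case
  proof (intro allI impI ballI)
    fix \<theta> and N :: "('s \<times> nat list, 'a, 'p) emodel" and F :: "('t \<times> nat list, 'a, 'p) emodel" and g w
    assume IH: "\<forall>N F g. wf_fm \<theta> \<longrightarrow> agents_fm \<theta> \<subseteq> A \<longrightarrow> atf \<theta> \<subseteq> P \<longrightarrow> PMOR A P (N :: ('s \<times> nat list, 'a, 'p) emodel) (F :: ('t \<times> nat list, 'a, 'p) emodel) g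
     \<longrightarrow> (\<forall>w\<in>dom N. sat \<theta> N w = sat \<theta> F (g w))"
      and h: "wf_fm (Box (Star B) \<theta>)" "agents_fm (Box (Star B) \<theta>) \<subseteq> A" "atf (Box (Star B) \<theta>) \<subseteq> P"
        "PMOR A P N F g" and w: "w \<in> dom N"
    have B: "B \<subseteq> A" using h by simp
    have IH0: "\<forall>v\<in>dom N. sat \<theta> N v = sat \<theta> F (g v)" using IH[rule_format, of N F g] h by simp
    then have IH': "\<And>v. v \<in> dom N \<Longrightarrow> sat \<theta> N v = sat \<theta> F (g v)" by blast
    show "sat (Box (Star B) \<theta>) N w = sat (Box (Star B) \<theta>) F (g w)"
    proof
      assume L: "sat (Box (Star B) \<theta>) N w"
      show "sat (Box (Star B) \<theta>) F (g w)"
      proof (simp only: sat.simps sat_box.simps, intro allI impI)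
        fix z assume "(g w, z) \<in> (\<Union>a\<in>B. rel F a)\<^sup>*"
        from star_back[OF h(4) B this w] obtain v where
          "v \<in> dom N" "(w, v) \<in> (\<Union>a\<in>B. rel N a)\<^sup>*" "g v = z" by blast
        then show "sat \<theta> F z" using L IH'[of v] by (cases v) auto
      qed
    next
      assume R: "sat (Box (Star B) \<theta>) F (g w)"
      show "sat (Box (Star B) \<theta>) N w"
      proof (simp only: sat.simps sat_box.simps, intro allI impI)
        fix v assume v: "(w, v) \<in> (\<Union>a\<in>B. rel N a)\<^sup>*"
        from star_forth[OF h(4) B v w] have "v \<in> dom N" "(g w, g v) \<in> (\<Union>a\<in>B. rel F a)\<^sup>*" by blast+
        then show "sat \<theta> N v" using R IH'[of v] by (cases "g v") auto
      qed
    qed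
  qed
next
  case (Upd E Rl pre post e)
  show ?case
  proof (intro allI impI ballI)
    fix \<theta> and N :: "('s \<times> nat list, 'a, 'p) emodel" and F :: "('t \<times> nat list, 'a, 'p) emodel" and g w
    assume IH: "\<forall>N F g. wf_fm \<theta> \<longrightarrow> agents_fm \<theta> \<subseteq> A \<longrightarrow> atf \<theta> \<subseteq> P \<longrightarrow> PMOR A P (N :: ('s \<times> nat list, 'a, 'p) emodel) (F :: ('t \<times> nat list, 'a, 'p) emodel) g
     \<longrightarrow> (\<forall>w\<in>dom N. sat \<theta> N w = sat \<theta> F (g w))"
      and h: "wf_fm (Box (Upd E Rl pre post e) \<theta>)" "agents_fm (Box (Upd E Rl pre post e) \<theta>) \<subseteq> A"
        "atf (Box (Upd E Rl pre post e) \<theta>) \<subseteq> P"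
        "PMOR A P N F g" and w: "w \<in> dom N"
    have eE: "e \<in> E" using h by simp
    have IHpre: "\<And>f v. f \<in> E \<Longrightarrow> v \<in> dom N \<Longrightarrow> sat (pre f) N v = sat (pre f) F (g v)"
    proof -
      fix f v assume f: "f \<in> E" and v: "v \<in> dom N"
      have w: "wf_fm (pre f)" "agents_fm (pre f) \<subseteq> A" "atf (pre f) \<subseteq> P" using h f by auto
      have H: "\<forall>N F g. wf_fm (pre f) \<longrightarrow> agents_fm (pre f) \<subseteq> A \<longrightarrow> atf (pre f) \<subseteq> P \<longrightarrow> PMOR A P (N :: ('s \<times> nat list, 'a, 'p) emodel) (F :: ('t \<times> nat list, 'a, 'p) emodel) g
     \<longrightarrow> (\<forall>w\<in>dom N. sat (pre f) N w = sat (pre f) F (g w))"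
        using Upd.hyps(1)[of "pre f"] by simp
      show "sat (pre f) N v = sat (pre f) F (g v)" using H[rule_format, OF w h(4) v] .
    qed
    have IHpost: "\<And>f v p. f \<in> E \<Longrightarrow> v \<in> dom N \<Longrightarrow> p \<in> P \<Longrightarrow> sat (post f p) N v = sat (post f p) F (g v)"
    proof -
      fix f v p assume f: "f \<in> E" and v: "v \<in> dom N" and p: "p \<in> P"
      show "sat (post f p) N v = sat (post f p) F (g v)"
      proof (cases "post f p = Atom p")
        case True
        then show ?thesis using h(4) v p by (simp add: PMOR_def)
      next
        case False
        have w: "wf_fm (post f p)" "agents_fm (post f p) \<subseteq> A" "atf (post f p) \<subseteq> P"
        proof -
          show "wf_fm (post f p)" using h f by simp
          show "agents_fm (post f p) \<subseteq> A" using h f by auto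
          have "atf (post f p) \<subseteq> ata (Upd E Rl pre post e)" using f False by auto
          then show "atf (post f p) \<subseteq> P" using h(3) by auto
        qed
        have H: "\<forall>N F g. wf_fm (post f p) \<longrightarrow> agents_fm (post f p) \<subseteq> A \<longrightarrow> atf (post f p) \<subseteq> P \<longrightarrow> PMOR A P (N :: ('s \<times> nat list, 'a, 'p) emodel) (F :: ('t \<times> nat list, 'a, 'p) emodel) g
     \<longrightarrow> (\<forall>w\<in>dom N. sat (post f p) N w = sat (post f p) F (g w))"
          using Upd.hyps(2)[of "post f" "post f p"] by simp
        show ?thesis using H[rule_format, OF w h(4) v] .
      qed
    qed
    have pm': "PMOR A P (upd N E Rl (\<lambda>f. sat (pre f)) (\<lambda>f p. sat (post f p)))
                 (upd F E Rl (\<lambda>f. sat (pre f)) (\<lambda>f p. sat (post f p))) (gl g)"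
      by (rule PMOR_upd[OF h(4)]) (auto simp: IHpre IHpost)
    obtain x m where xm: "w = (x, m)" by (cases w)
    have IH': "\<And>v. v \<in> dom (upd N E Rl (\<lambda>f. sat (pre f)) (\<lambda>f p. sat (post f p))) \<Longrightarrow>
       sat \<theta> (upd N E Rl (\<lambda>f. sat (pre f)) (\<lambda>f p. sat (post f p))) v =
       sat \<theta> (upd F E Rl (\<lambda>f. sat (pre f)) (\<lambda>f p. sat (post f p))) (gl g v)"
      using IH h pm' by simp
    show "sat (Box (Upd E Rl pre post e) \<theta>) N w = sat (Box (Upd E Rl pre post e) \<theta>) F (g w)"
    proof (cases "sat (pre e) N w")
      case True
      then have d: "(x, m @ [e]) \<in> dom (upd N E Rl (\<lambda>f. sat (pre f)) (\<lambda>f p. sat (post f p)))"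
        using w eE by (simp add: upd_dom xm)
      have "gl g (x, m @ [e]) = (fst (g w), snd (g w) @ [e])" by (simp add: gl_def xm)
      then show ?thesis using True IH'[OF d] IHpre[OF eE w] by (simp add: xm)
    next
      case False
      then show ?thesis using IHpre[OF eE w] by simp
    qed
  qed
qed

lemma pm:
  assumes "wf_fm \<psi>" "agents_fm \<psi> \<subseteq> A" "atf \<psi> \<subseteq> P" "PMOR A P N F g" "w \<in> dom N"
  shows "sat \<psi> N w = sat \<psi> F (g w)"
  using pm_main[of \<psi> A P] assms by blast


primrec clo :: "('a, 'p) fm \<Rightarrow> ('a, 'p) fm set"
  and cloa :: "('a, 'p) act \<Rightarrow> ('a, 'p) fm \<Rightarrow> ('a, 'p) fm set \<Rightarrow> ('a, 'p) fm set" where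
  "clo (Atom p) = {Atom p}"
| "clo (Neg \<phi>) = insert (Neg \<phi>) (clo \<phi>)"
| "clo (Conj \<phi> \<psi>) = insert (Conj \<phi> \<psi>) (clo \<phi> \<union> clo \<psi>)"
| "clo (Box \<alpha> \<phi>) = cloa \<alpha> (id \<phi>) (clo \<phi>)"
| "cloa (Ag a) \<phi> C = insert (Box (Ag a) \<phi>) C"
| "cloa (Star B) \<phi> C = insert (Box (Star B) \<phi>) ((\<lambda>a. Box (Ag a) (Box (Star B) \<phi>)) ` B \<union> C)"
| "cloa (Upd E Rl pre post e) \<phi> C =
     (\<lambda>(g, \<theta>). Box (Upd E Rl pre post g) \<theta>) ` (E \<times> C)
   \<union> (\<lambda>(a, g, \<theta>). Box (Ag a) (Box (Upd E Rl pre post g) \<theta>)) ` {(a, g, \<theta>). g \<in> E \<and> Box (Ag a) \<theta> \<in> C}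
   \<union> (\<Union>g\<in>E. clo (pre g))
   \<union> (\<Union>g\<in>E. \<Union>p\<in>{p. Atom p \<in> C}. clo (post g p))"

definition FILT :: "('a, 'p) fm set \<Rightarrow> ('s \<times> nat list, 'a, 'p) emodel \<Rightarrow> ('t \<times> nat list, 'a, 'p) emodel
   \<Rightarrow> ('s \<times> nat list \<Rightarrow> 't \<times> nat list) \<Rightarrow> bool" where
  "FILT G N F h \<longleftrightarrow> h ` dom N = dom F \<and> (\<forall>a. rel N a \<subseteq> dom N \<times> dom N)
    \<and> (\<forall>a. rel F a \<subseteq> dom F \<times> dom F)
    \<and> (\<forall>a w v. (w, v) \<in> rel N a \<longrightarrow> (h w, h v) \<in> rel F a)
    \<and> (\<forall>a w v \<psi>. w \<in> dom N \<longrightarrow> v \<in> dom N \<longrightarrow> (h w, h v) \<in> rel F a \<longrightarrow> Box (Ag a) \<psi> \<in> G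
         \<longrightarrow> sat (Box (Ag a) \<psi>) N w \<longrightarrow> sat \<psi> N v)
    \<and> (\<forall>w v \<psi>. w \<in> dom N \<longrightarrow> v \<in> dom N \<longrightarrow> h w = h v \<longrightarrow> \<psi> \<in> G \<longrightarrow> sat \<psi> N w = sat \<psi> N v)
    \<and> (\<forall>p w. Atom p \<in> G \<longrightarrow> w \<in> dom N \<longrightarrow> (w \<in> val N p \<longleftrightarrow> h w \<in> val F p))"

lemma FILT_upd:
  fixes N :: "('s \<times> nat list, 'a, 'p) emodel" and F :: "('t \<times> nat list, 'a, 'p) emodel"
  assumes fi: "FILT G N F h"
    and pre: "\<And>f w. f \<in> E \<Longrightarrow> w \<in> dom N \<Longrightarrow> sat (pre f) N w = sat (pre f) F (h w)"
    and post: "\<And>f w p. f \<in> E \<Longrightarrow> w \<in> dom N \<Longrightarrow> Atom p \<in> G' \<Longrightarrow> sat (post f p) N w = sat (post f p) F (h w)"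
    and G1: "\<And>g \<theta>. g \<in> E \<Longrightarrow> \<theta> \<in> G' \<Longrightarrow> Box (Upd E Rl pre post g) \<theta> \<in> G"
    and G2: "\<And>g a \<theta>. g \<in> E \<Longrightarrow> Box (Ag a) \<theta> \<in> G' \<Longrightarrow> Box (Ag a) (Box (Upd E Rl pre post g) \<theta>) \<in> G"
  shows "FILT G' (upd N E Rl (\<lambda>f. sat (pre f)) (\<lambda>f p. sat (post f p)))
                 (upd F E Rl (\<lambda>f. sat (pre f)) (\<lambda>f p. sat (post f p))) (gl h)"
proof -
  let ?N = "upd N E Rl (\<lambda>f. sat (pre f)) (\<lambda>f p. sat (post f p))"
  let ?F = "upd F E Rl (\<lambda>f. sat (pre f)) (\<lambda>f p. sat (post f p))"
  from fi have hd: "h ` dom N = dom F" and rN: "\<And>a. rel N a \<subseteq> dom N \<times> dom N"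
    and rF: "\<And>a. rel F a \<subseteq> dom F \<times> dom F"
    and fb: "\<And>a w v. (w, v) \<in> rel N a \<Longrightarrow> (h w, h v) \<in> rel F a"
    and fc: "\<And>a w v \<psi>. w \<in> dom N \<Longrightarrow> v \<in> dom N \<Longrightarrow> (h w, h v) \<in> rel F a \<Longrightarrow> Box (Ag a) \<psi> \<in> G
         \<Longrightarrow> sat (Box (Ag a) \<psi>) N w \<Longrightarrow> sat \<psi> N v"
    and fa: "\<And>w v \<psi>. w \<in> dom N \<Longrightarrow> v \<in> dom N \<Longrightarrow> h w = h v \<Longrightarrow> \<psi> \<in> G \<Longrightarrow> sat \<psi> N w = sat \<psi> N v"
    unfolding FILT_def by blast+
  have dom1: "gl h w \<in> dom ?F" if w: "w \<in> dom ?N" for w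
  proof -
    obtain x m where xm: "w = (x, m)" by (cases w)
    obtain y n where yn: "h (x, butlast m) = (y, n)" by (cases "h (x, butlast m)")
    from w have wd: "(x, butlast m) \<in> dom N" "m \<noteq> []" "last m \<in> E" "sat (pre (last m)) N (x, butlast m)"
      by (auto simp: xm upd_dom)
    have "(y, n) \<in> dom F" using hd wd(1) yn by (metis image_eqI)
    moreover have "sat (pre (last m)) F (y, n)" using pre[OF wd(3) wd(1)] wd(4) yn by simp
    ultimately show ?thesis using wd by (simp add: gl_def xm yn upd_dom)
  qed
  have dom2: "z \<in> gl h ` dom ?N" if z: "z \<in> dom ?F" for z
  proof -
    obtain y k where yk: "z = (y, k)" by (cases z)
    from z have zd: "(y, butlast k) \<in> dom F" "k \<noteq> []" "last k \<in> E" "sat (pre (last k)) F (y, butlast k)"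
      by (auto simp: yk upd_dom)
    from zd(1) hd obtain w0 where w0: "w0 \<in> dom N" "h w0 = (y, butlast k)" by (metis imageE)
    obtain x m0 where xm: "w0 = (x, m0)" by (cases w0)
    have "sat (pre (last k)) N w0" using pre[OF zd(3) w0(1)] w0 zd by simp
    then have "(x, m0 @ [last k]) \<in> dom ?N" using w0 zd by (simp add: upd_dom xm)
    moreover have "gl h (x, m0 @ [last k]) = z" using w0 zd by (simp add: gl_def xm yk)
    ultimately show ?thesis by (metis image_eqI)
  qed
  show ?thesis
    unfolding FILT_def
  proof (intro conjI allI impI)
    show "gl h ` dom ?N = dom ?F" using dom1 dom2 by blast
  next
    fix a show "rel ?N a \<subseteq> dom ?N \<times> dom ?N" using upd_rel_dom by fast
  next
    fix a show "rel ?F a \<subseteq> dom ?F \<times> dom ?F" using upd_rel_dom by fast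
  next
    fix a w v assume wv: "(w, v) \<in> rel ?N a"
    obtain x m where xm: "w = (x, m)" by (cases w)
    obtain y n where yn: "v = (y, n)" by (cases v)
    from wv have R: "((x, butlast m), (y, butlast n)) \<in> rel N a" "(last m, last n) \<in> Rl a"
      and d: "w \<in> dom ?N" "v \<in> dom ?N"
      by (auto simp: xm yn upd_rel)
    have d': "gl h w \<in> dom ?F" "gl h v \<in> dom ?F" using dom1 d by auto
    show "(gl h w, gl h v) \<in> rel ?F a"
      using d' fb[OF R(1)] R(2)
      by (cases "h (x, butlast m)"; cases "h (y, butlast n)"; simp add: xm yn gl_def upd_rel)
  next
    fix a w v \<theta>
    assume w: "w \<in> dom ?N" and v: "v \<in> dom ?N" and R: "(gl h w, gl h v) \<in> rel ?F a"
      and G: "Box (Ag a) \<theta> \<in> G'" and S: "sat (Box (Ag a) \<theta>) ?N w"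
    obtain x m where xm: "w = (x, m)" by (cases w)
    obtain y n where yn: "v = (y, n)" by (cases v)
    from w have wd: "(x, butlast m) \<in> dom N" "m \<noteq> []" "last m \<in> E" by (auto simp: xm upd_dom)
    from v have vd: "(y, butlast n) \<in> dom N" "n \<noteq> []" "last n \<in> E" "sat (pre (last n)) N (y, butlast n)"
      by (auto simp: yn upd_dom)
    from R have R1: "(h (x, butlast m), h (y, butlast n)) \<in> rel F a" and R2: "(last m, last n) \<in> Rl a"
      by (cases "h (x, butlast m)"; cases "h (y, butlast n)"; simp add: xm yn gl_def upd_rel)+
    let ?g = "last n"
    have "sat (Box (Ag a) (Box (Upd E Rl pre post ?g) \<theta>)) N (x, butlast m)"
    proof (simp only: sat.simps sat_box.simps, intro allI impI)
      fix u assume u: "((x, butlast m), u) \<in> rel N a" and pu: "sat (pre ?g) N u"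
      obtain y' n' where u': "u = (y', n')" by (cases u)
      have ud: "u \<in> dom N" using u rN by blast
      have d: "(y', n' @ [?g]) \<in> dom ?N" using ud pu vd by (simp add: upd_dom u')
      have "(w, (y', n' @ [?g])) \<in> rel ?N a" using d w u R2 by (simp add: upd_rel xm u')
      then have "sat \<theta> ?N (y', n' @ [?g])" using S by simp
      then show "sat \<theta> ?N (fst u, snd u @ [?g])" by (simp add: u')
    qed
    from fc[OF wd(1) vd(1) R1 G2[OF vd(3) G] this]
    have "sat (Box (Upd E Rl pre post ?g) \<theta>) N (y, butlast n)" .
    then show "sat \<theta> ?N v" using vd by (simp add: yn)
  next
    fix w v \<theta>
    assume w: "w \<in> dom ?N" and v: "v \<in> dom ?N" and E: "gl h w = gl h v" and G: "\<theta> \<in> G'"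
    obtain x m where xm: "w = (x, m)" by (cases w)
    obtain y n where yn: "v = (y, n)" by (cases v)
    from w have wd: "(x, butlast m) \<in> dom N" "m \<noteq> []" "last m \<in> E" "sat (pre (last m)) N (x, butlast m)"
      by (auto simp: xm upd_dom)
    from v have vd: "(y, butlast n) \<in> dom N" "n \<noteq> []" "last n \<in> E" "sat (pre (last n)) N (y, butlast n)"
      by (auto simp: yn upd_dom)
    from E have E1: "h (x, butlast m) = h (y, butlast n)" and E2: "last m = last n"
      by (cases "h (x, butlast m)"; cases "h (y, butlast n)"; simp add: xm yn gl_def)+
    have "sat (Box (Upd E Rl pre post (last m)) \<theta>) N (x, butlast m) = sat (Box (Upd E Rl pre post (last m)) \<theta>) N (y, butlast n)"
      by (rule fa[OF wd(1) vd(1) E1 G1[OF wd(3) G]])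
    then show "sat \<theta> ?N w = sat \<theta> ?N v" using wd vd E2 append_butlast_last_id[OF wd(2)] by (simp add: xm yn)
  next
    fix p w assume G: "Atom p \<in> G'" and w: "w \<in> dom ?N"
    obtain x m where xm: "w = (x, m)" by (cases w)
    from w have wd: "(x, butlast m) \<in> dom N" "m \<noteq> []" "last m \<in> E" by (auto simp: xm upd_dom)
    have gd: "gl h w \<in> dom ?F" using dom1 w by blast
    show "w \<in> val ?N p \<longleftrightarrow> gl h w \<in> val ?F p"
      using gd w post[OF wd(3) wd(1) G]
      by (cases "h (x, butlast m)") (auto simp: xm gl_def upd_val)
  qed
qed


lemma filt_star_forth:
  assumes fi: "FILT G N F h"
  shows "(w, v) \<in> (\<Union>a\<in>B. rel N a)\<^sup>* \<Longrightarrow> w \<in> dom N \<Longrightarrow> v \<in> dom N \<and> (h w, h v) \<in> (\<Union>a\<in>B. rel F a)\<^sup>*"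
proof (induction rule: rtrancl_induct)
  case base then show ?case by simp
next
  case (step y z)
  then obtain a where a: "a \<in> B" "(y, z) \<in> rel N a" by blast
  with fi have "z \<in> dom N" "(h y, h z) \<in> rel F a" unfolding FILT_def by blast+
  with step a show ?case by (meson UN_I rtrancl.rtrancl_into_rtrancl)
qed

lemma filt_main:
  "(\<forall>N F h G. wf_fm \<psi> \<longrightarrow> clo \<psi> \<subseteq> G \<longrightarrow> FILT G (N :: ('s \<times> nat list, 'a, 'p) emodel) (F :: ('t \<times> nat list, 'a, 'p) emodel) h
     \<longrightarrow> (\<forall>w\<in>dom N. sat \<psi> N w = sat \<psi> F (h w)))
  \<and> (\<forall>\<theta>. (\<forall>N F h G. wf_fm \<theta> \<longrightarrow> clo \<theta> \<subseteq> G \<longrightarrow> FILT G (N :: ('s \<times> nat list, 'a, 'p) emodel) (F :: ('t \<times> nat list, 'a, 'p) emodel) h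
     \<longrightarrow> (\<forall>w\<in>dom N. sat \<theta> N w = sat \<theta> F (h w))) \<longrightarrow>
     (\<forall>N F h G. wf_fm (Box \<alpha> \<theta>) \<longrightarrow> clo (Box \<alpha> \<theta>) \<subseteq> G \<longrightarrow> FILT G (N :: ('s \<times> nat list, 'a, 'p) emodel) (F :: ('t \<times> nat list, 'a, 'p) emodel) h
     \<longrightarrow> (\<forall>w\<in>dom N. sat (Box \<alpha> \<theta>) N w = sat (Box \<alpha> \<theta>) F (h w))))"
proof (induct rule: fm_act.induct[where ?P1.0 = "\<lambda>\<psi>. \<forall>N F h G. wf_fm \<psi> \<longrightarrow> clo \<psi> \<subseteq> G \<longrightarrow> FILT G (N :: ('s \<times> nat list, 'a, 'p) emodel) (F :: ('t \<times> nat list, 'a, 'p) emodel) h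
     \<longrightarrow> (\<forall>w\<in>dom N. sat \<psi> N w = sat \<psi> F (h w))" and ?P2.0 = "\<lambda>\<alpha>. \<forall>\<theta>. (\<forall>N F h G. wf_fm \<theta> \<longrightarrow> clo \<theta> \<subseteq> G \<longrightarrow> FILT G (N :: ('s \<times> nat list, 'a, 'p) emodel) (F :: ('t \<times> nat list, 'a, 'p) emodel) h
     \<longrightarrow> (\<forall>w\<in>dom N. sat \<theta> N w = sat \<theta> F (h w))) \<longrightarrow>
     (\<forall>N F h G. wf_fm (Box \<alpha> \<theta>) \<longrightarrow> clo (Box \<alpha> \<theta>) \<subseteq> G \<longrightarrow> FILT G (N :: ('s \<times> nat list, 'a, 'p) emodel) (F :: ('t \<times> nat list, 'a, 'p) emodel) h
     \<longrightarrow> (\<forall>w\<in>dom N. sat (Box \<alpha> \<theta>) N w = sat (Box \<alpha> \<theta>) F (h w)))"])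
  case (Atom x)
  then show ?case by (auto simp: FILT_def)
next
  case (Neg x)
  then show ?case by auto
next
  case (Conj x1 x2)
  then show ?case by auto
next
  case (Box x1 x2)
  then show ?case by blast
next
  case (Ag a)
  show ?case
  proof (intro allI impI ballI)
    fix \<theta> and N :: "('s \<times> nat list, 'a, 'p) emodel" and F :: "('t \<times> nat list, 'a, 'p) emodel" and h G w
    assume IH: "\<forall>N F h G. wf_fm \<theta> \<longrightarrow> clo \<theta> \<subseteq> G \<longrightarrow> FILT G (N :: ('s \<times> nat list, 'a, 'p) emodel) (F :: ('t \<times> nat list, 'a, 'p) emodel) h
     \<longrightarrow> (\<forall>w\<in>dom N. sat \<theta> N w = sat \<theta> F (h w))"
      and hy: "wf_fm (Box (Ag a) \<theta>)" "clo (Box (Ag a) \<theta>) \<subseteq> G" "FILT G N F h" and w: "w \<in> dom N"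
    have IH': "\<And>v. v \<in> dom N \<Longrightarrow> sat \<theta> N v = sat \<theta> F (h v)" using IH[rule_format, of G N F h] hy by simp
    have G: "Box (Ag a) \<theta> \<in> G" using hy by simp
    from hy(3) have hd: "h ` dom N = dom F" and rN: "\<And>a. rel N a \<subseteq> dom N \<times> dom N"
      and rF: "\<And>a. rel F a \<subseteq> dom F \<times> dom F"
      and fb: "\<And>a w v. (w, v) \<in> rel N a \<Longrightarrow> (h w, h v) \<in> rel F a"
      and fc: "\<And>a w v \<psi>. w \<in> dom N \<Longrightarrow> v \<in> dom N \<Longrightarrow> (h w, h v) \<in> rel F a \<Longrightarrow> Box (Ag a) \<psi> \<in> G
         \<Longrightarrow> sat (Box (Ag a) \<psi>) N w \<Longrightarrow> sat \<psi> N v"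
      unfolding FILT_def by blast+
    show "sat (Box (Ag a) \<theta>) N w = sat (Box (Ag a) \<theta>) F (h w)"
    proof
      assume L: "sat (Box (Ag a) \<theta>) N w"
      show "sat (Box (Ag a) \<theta>) F (h w)"
      proof (simp only: sat.simps sat_box.simps, intro allI impI)
        fix z assume z: "(h w, z) \<in> rel F a"
        then have "z \<in> dom F" using rF by blast
        then obtain v where v: "v \<in> dom N" "h v = z" using hd by (metis imageE)
        have "sat \<theta> N v" using fc[OF w v(1) _ G L] z v by simp
        then show "sat \<theta> F z" using IH'[OF v(1)] v by simp
      qed
    next
      assume R: "sat (Box (Ag a) \<theta>) F (h w)"
      show "sat (Box (Ag a) \<theta>) N w"
      proof (simp only: sat.simps sat_box.simps, intro allI impI)
        fix v assume v: "(w, v) \<in> rel N a"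
        then have "v \<in> dom N" "(h w, h v) \<in> rel F a" using rN fb by blast+
        then show "sat \<theta> N v" using R IH'[of v] by (cases "h v") auto
      qed
    qed
  qed
next
  case (Star B)
  show ?case
  proof (intro allI impI ballI)
    fix \<theta> and N :: "('s \<times> nat list, 'a, 'p) emodel" and F :: "('t \<times> nat list, 'a, 'p) emodel" and h G w
    assume IH: "\<forall>N F h G. wf_fm \<theta> \<longrightarrow> clo \<theta> \<subseteq> G \<longrightarrow> FILT G (N :: ('s \<times> nat list, 'a, 'p) emodel) (F :: ('t \<times> nat list, 'a, 'p) emodel) h
     \<longrightarrow> (\<forall>w\<in>dom N. sat \<theta> N w = sat \<theta> F (h w))"
      and hy: "wf_fm (Box (Star B) \<theta>)" "clo (Box (Star B) \<theta>) \<subseteq> G" "FILT G N F h" and w: "w \<in> dom N"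
    have IH': "\<And>v. v \<in> dom N \<Longrightarrow> sat \<theta> N v = sat \<theta> F (h v)" using IH[rule_format, of G N F h] hy by simp
    have G: "\<And>a. a \<in> B \<Longrightarrow> Box (Ag a) (Box (Star B) \<theta>) \<in> G" using hy by auto
    from hy(3) have hd: "h ` dom N = dom F" and rN: "\<And>a. rel N a \<subseteq> dom N \<times> dom N"
      and rF: "\<And>a. rel F a \<subseteq> dom F \<times> dom F"
      and fc: "\<And>a w v \<psi>. w \<in> dom N \<Longrightarrow> v \<in> dom N \<Longrightarrow> (h w, h v) \<in> rel F a \<Longrightarrow> Box (Ag a) \<psi> \<in> G
         \<Longrightarrow> sat (Box (Ag a) \<psi>) N w \<Longrightarrow> sat \<psi> N v"
      unfolding FILT_def by blast+
    show "sat (Box (Star B) \<theta>) N w = sat (Box (Star B) \<theta>) F (h w)"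
    proof
      assume L: "sat (Box (Star B) \<theta>) N w"
      have inv: "\<exists>v. v \<in> dom N \<and> h v = z \<and> sat (Box (Star B) \<theta>) N v"
        if z: "(h w, z) \<in> (\<Union>a\<in>B. rel F a)\<^sup>*" for z
        using z
      proof (induction rule: rtrancl_induct)
        case base then show ?case using w L by blast
      next
        case (step y z)
        then obtain v where v: "v \<in> dom N" "h v = y" "sat (Box (Star B) \<theta>) N v" by blast
        from step obtain a where a: "a \<in> B" "(y, z) \<in> rel F a" by blast
        then have "z \<in> dom F" using rF by blast
        then obtain u where u: "u \<in> dom N" "h u = z" using hd by (metis imageE)
        have "sat (Box (Ag a) (Box (Star B) \<theta>)) N v"
        proof (simp only: sat.simps sat_box.simps, intro allI impI)
          fix u' v' assume "(v, u') \<in> rel N a" "(u', v') \<in> (\<Union>a\<in>B. rel N a)\<^sup>*"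
          then have "(v, v') \<in> (\<Union>a\<in>B. rel N a)\<^sup>*" using a(1)
            by (meson UN_I converse_rtrancl_into_rtrancl)
          then show "sat \<theta> N v'" using v(3) by (cases v') auto
        qed
        from fc[OF v(1) u(1) _ G[OF a(1)] this] a v u have "sat (Box (Star B) \<theta>) N u" by simp
        then show ?case using u by blast
      qed
      show "sat (Box (Star B) \<theta>) F (h w)"
      proof (simp only: sat.simps sat_box.simps, intro allI impI)
        fix z assume "(h w, z) \<in> (\<Union>a\<in>B. rel F a)\<^sup>*"
        from inv[OF this] obtain v where v: "v \<in> dom N" "h v = z" "sat (Box (Star B) \<theta>) N v" by blast
        then have "sat \<theta> N v" by (cases v) auto
        then show "sat \<theta> F z" using IH'[OF v(1)] v by simp
      qed
    next
      assume R: "sat (Box (Star B) \<theta>) F (h w)"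
      show "sat (Box (Star B) \<theta>) N w"
      proof (simp only: sat.simps sat_box.simps, intro allI impI)
        fix v assume v: "(w, v) \<in> (\<Union>a\<in>B. rel N a)\<^sup>*"
        from filt_star_forth[OF hy(3) v w] have "v \<in> dom N" "(h w, h v) \<in> (\<Union>a\<in>B. rel F a)\<^sup>*" by blast+
        then show "sat \<theta> N v" using R IH'[of v] by (cases "h v") auto
      qed
    qed
  qed
next
  case (Upd E Rl pre post e)
  show ?case
  proof (intro allI impI ballI)
    fix \<theta> and N :: "('s \<times> nat list, 'a, 'p) emodel" and F :: "('t \<times> nat list, 'a, 'p) emodel" and h G w
    assume IH: "\<forall>N F h G. wf_fm \<theta> \<longrightarrow> clo \<theta> \<subseteq> G \<longrightarrow> FILT G (N :: ('s \<times> nat list, 'a, 'p) emodel) (F :: ('t \<times> nat list, 'a, 'p) emodel) h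
     \<longrightarrow> (\<forall>w\<in>dom N. sat \<theta> N w = sat \<theta> F (h w))"
      and hy: "wf_fm (Box (Upd E Rl pre post e) \<theta>)" "clo (Box (Upd E Rl pre post e) \<theta>) \<subseteq> G"
        "FILT G N F h" and w: "w \<in> dom N"
    have eE: "e \<in> E" using hy by simp
    have IHpre: "\<And>f v. f \<in> E \<Longrightarrow> v \<in> dom N \<Longrightarrow> sat (pre f) N v = sat (pre f) F (h v)"
    proof -
      fix f v assume f: "f \<in> E" and v: "v \<in> dom N"
      have wc: "wf_fm (pre f)" "clo (pre f) \<subseteq> G" using hy f by auto
      have H: "\<forall>N F h G. wf_fm (pre f) \<longrightarrow> clo (pre f) \<subseteq> G \<longrightarrow> FILT G (N :: ('s \<times> nat list, 'a, 'p) emodel) (F :: ('t \<times> nat list, 'a, 'p) emodel) h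
     \<longrightarrow> (\<forall>w\<in>dom N. sat (pre f) N w = sat (pre f) F (h w))"
        using Upd.hyps(1)[of "pre f"] by simp
      show "sat (pre f) N v = sat (pre f) F (h v)" using H[rule_format, OF wc hy(3) v] .
    qed
    have IHpost: "\<And>f v p. f \<in> E \<Longrightarrow> v \<in> dom N \<Longrightarrow> Atom p \<in> clo \<theta> \<Longrightarrow> sat (post f p) N v = sat (post f p) F (h v)"
    proof -
      fix f v p assume f: "f \<in> E" and v: "v \<in> dom N" and p: "Atom p \<in> clo \<theta>"
      have wc1: "wf_fm (post f p)" using hy f by simp
      have "clo (post f p) \<subseteq> (\<Union>g\<in>E. \<Union>p\<in>{p. Atom p \<in> clo \<theta>}. clo (post g p))" using f p by blast
      also have "\<dots> \<subseteq> G" using hy(2) by simp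
      finally have wc: "wf_fm (post f p)" "clo (post f p) \<subseteq> G" using wc1 by auto
      have H: "\<forall>N F h G. wf_fm (post f p) \<longrightarrow> clo (post f p) \<subseteq> G \<longrightarrow> FILT G (N :: ('s \<times> nat list, 'a, 'p) emodel) (F :: ('t \<times> nat list, 'a, 'p) emodel) h
     \<longrightarrow> (\<forall>w\<in>dom N. sat (post f p) N w = sat (post f p) F (h w))"
        using Upd.hyps(2)[of "post f" "post f p"] by simp
      show "sat (post f p) N v = sat (post f p) F (h v)" using H[rule_format, OF wc hy(3) v] .
    qed
    have G1: "\<And>g \<chi>. g \<in> E \<Longrightarrow> \<chi> \<in> clo \<theta> \<Longrightarrow> Box (Upd E Rl pre post g) \<chi> \<in> G"
      using hy(2) by auto
    have G2: "\<And>g a \<chi>. g \<in> E \<Longrightarrow> Box (Ag a) \<chi> \<in> clo \<theta> \<Longrightarrow> Box (Ag a) (Box (Upd E Rl pre post g) \<chi>) \<in> G"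
    proof -
      fix g a \<chi> assume "g \<in> E" "Box (Ag a) \<chi> \<in> clo \<theta>"
      then have mem: "Box (Ag a) (Box (Upd E Rl pre post g) \<chi>) \<in> (\<lambda>(a, g, \<theta>). Box (Ag a) (Box (Upd E Rl pre post g) \<theta>)) ` {(a, g, \<theta>'). g \<in> E \<and> Box (Ag a) \<theta>' \<in> clo \<theta>}"
        by (rule_tac x="(a, g, \<chi>)" in image_eqI) auto
      have S: "(\<lambda>(a, g, \<theta>). Box (Ag a) (Box (Upd E Rl pre post g) \<theta>)) ` {(a, g, \<theta>'). g \<in> E \<and> Box (Ag a) \<theta>' \<in> clo \<theta>} \<subseteq> G"
        using hy(2) by simp
      show "Box (Ag a) (Box (Upd E Rl pre post g) \<chi>) \<in> G" using subsetD[OF S mem] .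
    qed
    have fi': "FILT (clo \<theta>) (upd N E Rl (\<lambda>f. sat (pre f)) (\<lambda>f p. sat (post f p)))
                 (upd F E Rl (\<lambda>f. sat (pre f)) (\<lambda>f p. sat (post f p))) (gl h)"
      by (rule FILT_upd[OF hy(3) IHpre IHpost G1 G2])
    obtain x m where xm: "w = (x, m)" by (cases w)
    have IH': "\<And>v. v \<in> dom (upd N E Rl (\<lambda>f. sat (pre f)) (\<lambda>f p. sat (post f p))) \<Longrightarrow>
       sat \<theta> (upd N E Rl (\<lambda>f. sat (pre f)) (\<lambda>f p. sat (post f p))) v =
       sat \<theta> (upd F E Rl (\<lambda>f. sat (pre f)) (\<lambda>f p. sat (post f p))) (gl h v)"
      using IH[rule_format, OF _ _ fi'] hy by simp
    show "sat (Box (Upd E Rl pre post e) \<theta>) N w = sat (Box (Upd E Rl pre post e) \<theta>) F (h w)"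
    proof (cases "sat (pre e) N w")
      case True
      then have d: "(x, m @ [e]) \<in> dom (upd N E Rl (\<lambda>f. sat (pre f)) (\<lambda>f p. sat (post f p)))"
        using w eE by (simp add: upd_dom xm)
      have "gl h (x, m @ [e]) = (fst (h w), snd (h w) @ [e])" by (simp add: gl_def xm)
      then show ?thesis using True IH'[OF d] IHpre[OF eE w] by (simp add: xm)
    next
      case False
      then show ?thesis using IHpre[OF eE w] by simp
    qed
  qed
qed

lemma filt:
  assumes "wf_fm \<psi>" "clo \<psi> \<subseteq> G" "FILT G N F h" "w \<in> dom N"
  shows "sat \<psi> N w = sat \<psi> F (h w)"
  using filt_main[of \<psi>] assms by blast


lemma finite_clo_main:
  fixes \<psi> :: "('a::finite, 'p) fm" and \<alpha> :: "('a::finite, 'p) act"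
  shows "(wf_fm \<psi> \<longrightarrow> finite (clo \<psi>)) \<and> (\<forall>\<phi> C. wf_act \<alpha> \<longrightarrow> finite C \<longrightarrow> finite (cloa \<alpha> \<phi> C))"
proof (induct rule: fm_act.induct[where ?P1.0 = "\<lambda>\<psi> :: ('a::finite, 'p) fm. wf_fm \<psi> \<longrightarrow> finite (clo \<psi>)"
      and ?P2.0 = "\<lambda>\<alpha> :: ('a::finite, 'p) act. \<forall>\<phi> C. wf_act \<alpha> \<longrightarrow> finite C \<longrightarrow> finite (cloa \<alpha> \<phi> C)"])
  case (Upd E Rl pre post e)
  show ?case
  proof (intro allI impI)
    fix \<phi> and C :: "('a::finite, 'p) fm set"
    assume w: "wf_act (Upd E Rl pre post e)" and C: "finite C"
    have fE: "finite E" using w by simp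
    have f1: "finite ((\<lambda>(g, \<theta>). Box (Upd E Rl pre post g) \<theta>) ` (E \<times> C))" using fE C by simp
    have fa: "finite ((\<lambda>(a, \<theta>). Box (Ag a) \<theta>) -` C)"
      by (rule finite_vimageI[OF C]) (auto simp: inj_on_def)
    have "{(a, g, \<theta>). g \<in> E \<and> Box (Ag a) \<theta> \<in> C} \<subseteq> (\<lambda>((a, \<theta>), g). (a, g, \<theta>)) ` (((\<lambda>(a, \<theta>). Box (Ag a) \<theta>) -` C) \<times> E)"
    proof clarify
      fix a g \<theta> assume "g \<in> E" "Box (Ag a) \<theta> \<in> C"
      then show "(a, g, \<theta>) \<in> (\<lambda>((a, \<theta>), g). (a, g, \<theta>)) ` (((\<lambda>(a, \<theta>). Box (Ag a) \<theta>) -` C) \<times> E)"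
        by (intro image_eqI[where x="((a, \<theta>), g)"]) auto
    qed
    then have f2: "finite {(a, g, \<theta>). g \<in> E \<and> Box (Ag a) \<theta> \<in> C}"
      by (rule finite_subset) (use fa fE in simp)
    have f3: "finite (\<Union>g\<in>E. clo (pre g))" using Upd.hyps(1) w fE by auto
    have fp: "finite {p. Atom p \<in> C}"
      using finite_vimageI[OF C, of Atom] by (simp add: inj_on_def vimage_def)
    have "\<And>g p. g \<in> E \<Longrightarrow> finite (clo (post g p))"
    proof -
      fix g p assume g: "g \<in> E"
      show "finite (clo (post g p))" using Upd.hyps(2)[of "post g" "post g p"] w g by simp
    qed
    then have f4: "finite (\<Union>g\<in>E. \<Union>p\<in>{p. Atom p \<in> C}. clo (post g p))"
      using fE fp by blast
    show "finite (cloa (Upd E Rl pre post e) \<phi> C)" using f1 f2 f3 f4 by simp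
  qed
qed auto

lemma finite_clo: "wf_fm (\<psi> :: ('a::finite, 'p) fm) \<Longrightarrow> finite (clo \<psi>)"
  using finite_clo_main by blast


lemma finite_atf_main:
  fixes \<psi> :: "('a, 'p) fm" and \<alpha> :: "('a, 'p) act"
  shows "(wf_fm \<psi> \<longrightarrow> finite (atf \<psi>)) \<and> (wf_act \<alpha> \<longrightarrow> finite (ata \<alpha>))"
proof (induct rule: fm_act.induct[where ?P1.0 = "\<lambda>\<psi> :: ('a, 'p) fm. wf_fm \<psi> \<longrightarrow> finite (atf \<psi>)"
      and ?P2.0 = "\<lambda>\<alpha> :: ('a, 'p) act. wf_act \<alpha> \<longrightarrow> finite (ata \<alpha>)"])
  case (Upd E Rl pre post e)
  show ?case
  proof
    assume w: "wf_act (Upd E Rl pre post e)"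
    have fE: "finite E" using w by simp
    have "\<And>f. f \<in> E \<Longrightarrow> finite (atf (pre f) \<union> (\<Union>p\<in>{p. post f p \<noteq> Atom p}. atf (post f p)))"
    proof -
      fix f assume f: "f \<in> E"
      have "finite (atf (pre f))" using Upd.hyps(1)[of "pre f"] w f by simp
      moreover have "finite {p. post f p \<noteq> Atom p}" using w f by simp
      moreover have "\<And>p. finite (atf (post f p))" using Upd.hyps(2)[of "post f"] w f by simp
      ultimately show "finite (atf (pre f) \<union> (\<Union>p\<in>{p. post f p \<noteq> Atom p}. atf (post f p)))" by blast
    qed
    then show "finite (ata (Upd E Rl pre post e))"
      using fE by simp
  qed
qed auto

lemma finite_atf: "wf_fm \<psi> \<Longrightarrow> finite (atf \<psi>)"
  using finite_atf_main by blast


definition tt :: "('a, 'p) fm" where "tt = Neg (Conj (Atom undefined) (Neg (Atom undefined)))"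

fun conjs :: "('a, 'p) fm list \<Rightarrow> ('a, 'p) fm" where
  "conjs [] = tt"
| "conjs (x # xs) = Conj x (conjs xs)"

primrec chi :: "'a list \<Rightarrow> nat \<Rightarrow> ('a, 'p) fm" where
  "chi as 0 = tt"
| "chi as (Suc k) = conjs (map (\<lambda>a. Dia (Ag a) (chi as k)) as)"

lemma sat_tt[simp]: "sat tt M w" by (simp add: tt_def)
lemma wf_tt[simp]: "wf_fm tt" by (simp add: tt_def)

lemma sat_conjs: "sat (conjs xs) M w \<longleftrightarrow> (\<forall>x\<in>set xs. sat x M w)"
  by (induction xs) auto

lemma wf_conjs: "(\<forall>x\<in>set xs. wf_fm x) \<Longrightarrow> wf_fm (conjs xs)"
  by (induction xs) auto

lemma wf_chi: "wf_fm (chi as k)"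
  by (induction k) (auto intro!: wf_conjs simp: Dia_def)

lemma sat_dia_lift: "sat (Dia (Ag a) \<phi>) (lift M) (x, []) \<longleftrightarrow> (\<exists>y. (x, y) \<in> rel M a \<and> sat \<phi> (lift M) (y, []))"
  by (auto simp: Dia_def lift_def)

lemma sat_chi_Suc: "sat (chi as (Suc k)) (lift M) (x, []) \<longleftrightarrow>
   (\<forall>a\<in>set as. \<exists>y. (x, y) \<in> rel M a \<and> sat (chi as k) (lift M) (y, []))"
  by (simp add: sat_conjs sat_dia_lift)

lemma T_exists:
  fixes M :: "('s, 'a, 'p) emodel"
  assumes M: "is_model M" and fin: "finite (dom M)" and Ss: "Sser \<subseteq> dom M"
    and ser: "\<forall>a\<in>set as. \<forall>x\<in>Sser. \<exists>u\<in>Sser. (x, u) \<in> rel M a"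
  shows "\<exists>k. Sser \<subseteq> {x \<in> dom M. sat (chi as k :: ('a, 'p) fm) (lift M) (x, [])} \<and>
    (\<forall>x\<in>{x \<in> dom M. sat (chi as k :: ('a, 'p) fm) (lift M) (x, [])}. \<forall>a\<in>set as.
       \<exists>y\<in>{x \<in> dom M. sat (chi as k :: ('a, 'p) fm) (lift M) (x, [])}. (x, y) \<in> rel M a)"
proof -
  define S where "S k = {x \<in> dom M. sat (chi as k :: ('a, 'p) fm) (lift M) (x, [])}" for k
  have rM: "\<And>a x y. (x, y) \<in> rel M a \<Longrightarrow> y \<in> dom M" using M unfolding is_model_def by blast
  have S0: "S 0 = dom M" by (auto simp: S_def)
  have SSuc: "S (Suc k) = {x \<in> dom M. \<forall>a\<in>set as. \<exists>y\<in>S k. (x, y) \<in> rel M a}" for k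
    by (auto simp: S_def sat_chi_Suc simp del: chi.simps dest: rM)
  have mono: "S (Suc k) \<subseteq> S k" for k
  proof (induction k)
    case 0 then show ?case by (auto simp: S0 SSuc)
  next
    case (Suc k)
    then show ?case unfolding SSuc[of "Suc k"] SSuc[of k] by blast
  qed
  have ser_in: "Sser \<subseteq> S k" for k
  proof (induction k)
    case 0 then show ?case using Ss S0 by simp
  next
    case (Suc k)
    then show ?case unfolding SSuc using Ss ser by blast
  qed
  have fS: "finite (S k)" for k using fin by (simp add: S_def)
  have "\<exists>k. S (Suc k) = S k"
  proof (rule ccontr)
    assume "\<not> ?thesis"
    then have ne: "S (Suc k) \<noteq> S k" for k by blast
    have "card (S k) + k \<le> card (dom M)" for k
    proof (induction k)
      case 0 then show ?case by (simp add: S0)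
    next
      case (Suc k)
      have "S (Suc k) \<subset> S k" using mono ne by blast
      then have "card (S (Suc k)) < card (S k)" using fS by (simp add: psubset_card_mono)
      then show ?case using Suc by simp
    qed
    from this[of "Suc (card (dom M))"] show False by simp
  qed
  then obtain k where k: "S (Suc k) = S k" by blast
  have "\<forall>x\<in>S k. \<forall>a\<in>set as. \<exists>y\<in>S k. (x, y) \<in> rel M a"
  proof (intro ballI)
    fix x a assume "x \<in> S k" "a \<in> set as"
    then have "x \<in> S (Suc k)" using k by simp
    then show "\<exists>y\<in>S k. (x, y) \<in> rel M a" using \<open>a \<in> set as\<close> unfolding SSuc by blast
  qed
  then show ?thesis using ser_in unfolding S_def by blast
qed

lemma filtration_exists:
  fixes N :: "('w, 'a::finite, 'p) emodel" and \<phi> :: "('a, 'p) fm"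
  assumes N: "is_model N" and t: "t \<in> dom N" and h: "holds N t \<phi>" and wf: "wf_fm \<phi>"
  shows "\<exists>(F :: ((('a, 'p) fm set \<times> nat list), 'a, 'p) emodel) z. finite (dom F) \<and> z \<in> dom F
     \<and> (\<forall>a. rel F a \<subseteq> dom F \<times> dom F) \<and> sat \<phi> F z"
proof -
  let ?N = "lift N"
  define G where "G = clo \<phi>"
  define G2 where "G2 = G \<union> snd ` {(a, \<psi>). Box (Ag a) \<psi> \<in> G}"
  have fG: "finite G" using finite_clo[OF wf] by (simp add: G_def)
  have fa: "finite ((\<lambda>(a, \<theta>). Box (Ag a) \<theta>) -` G)"
    by (rule finite_vimageI[OF fG]) (auto simp: inj_on_def)
  have "{(a, \<psi>). Box (Ag a) \<psi> \<in> G} = (\<lambda>(a, \<theta>). Box (Ag a) \<theta>) -` G" by auto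
  then have fG2: "finite G2" using fG fa by (simp add: G2_def)
  define h where "h w = ({\<psi> \<in> G2. sat \<psi> ?N w}, [] :: nat list)" for w
  define F where "F = \<lparr> dom = h ` dom ?N, rel = (\<lambda>a. {(h w, h v) | w v. (w, v) \<in> rel ?N a}),
     val = (\<lambda>p. {h w | w. w \<in> dom ?N \<and> w \<in> val ?N p}) \<rparr>"
  have rN: "\<And>a. rel ?N a \<subseteq> dom ?N \<times> dom ?N" using N unfolding is_model_def lift_def by auto
  have agree: "\<And>w v \<psi>. h w = h v \<Longrightarrow> \<psi> \<in> G2 \<Longrightarrow> sat \<psi> ?N w = sat \<psi> ?N v"
    unfolding h_def by blast
  have GG2: "G \<subseteq> G2" by (simp add: G2_def)
  have boxG2: "\<And>a \<psi>. Box (Ag a) \<psi> \<in> G \<Longrightarrow> \<psi> \<in> G2"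
    unfolding G2_def by (auto intro!: image_eqI[where x="(_, _)"])
  have fi: "FILT G ?N F h"
    unfolding FILT_def
  proof (intro conjI allI impI)
    show "h ` dom ?N = dom F" by (simp add: F_def)
  next
    fix a show "rel ?N a \<subseteq> dom ?N \<times> dom ?N" using rN by blast
  next
    fix a show "rel F a \<subseteq> dom F \<times> dom F" using rN by (auto simp: F_def)
  next
    fix a w v assume "(w, v) \<in> rel ?N a"
    then show "(h w, h v) \<in> rel F a" unfolding F_def by (simp only: emodel.simps) blast
  next
    fix a w v \<psi>
    assume w: "w \<in> dom ?N" and v: "v \<in> dom ?N" and R: "(h w, h v) \<in> rel F a"
      and G: "Box (Ag a) \<psi> \<in> G" and S: "sat (Box (Ag a) \<psi>) ?N w"
    from R obtain w' v' where wv: "(w', v') \<in> rel ?N a" "h w = h w'" "h v = h v'"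
      by (auto simp: F_def)
    have "sat (Box (Ag a) \<psi>) ?N w'" using agree[OF wv(2)] G GG2 S by blast
    then have "sat \<psi> ?N v'" using wv(1) by (cases v') auto
    then show "sat \<psi> ?N v" using agree[OF wv(3) boxG2[OF G]] by simp
  next
    fix w v \<psi> assume "w \<in> dom ?N" "v \<in> dom ?N" "h w = h v" "\<psi> \<in> G"
    then show "sat \<psi> ?N w = sat \<psi> ?N v" using agree GG2 by blast
  next
    fix p w assume G: "Atom p \<in> G" and w: "w \<in> dom ?N"
    show "w \<in> val ?N p \<longleftrightarrow> h w \<in> val F p"
    proof
      assume "w \<in> val ?N p" then show "h w \<in> val F p" using w unfolding F_def by (simp only: emodel.simps) blast
    next
      assume "h w \<in> val F p"
      then obtain w' where w': "h w = h w'" "w' \<in> val ?N p" by (auto simp: F_def)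
      then show "w \<in> val ?N p" using agree[OF w'(1), of "Atom p"] G GG2 by auto
    qed
  qed
  have td: "(t, []) \<in> dom ?N" using t by (simp add: lift_def)
  have "sat \<phi> ?N (t, []) = sat \<phi> F (h (t, []))"
    by (rule filt[OF wf _ fi td]) (simp add: G_def)
  then have s: "sat \<phi> F (h (t, []))" using h by (simp add: holds_def)
  have "dom F \<subseteq> (\<lambda>S. (S, [])) ` Pow G2" by (auto simp: F_def h_def)
  then have "finite (dom F)" using fG2 by (meson finite_Pow_iff finite_imageI finite_subset)
  moreover have "h (t, []) \<in> dom F" using td by (simp add: F_def)
  moreover have "\<forall>a. rel F a \<subseteq> dom F \<times> dom F" using rN by (auto simp: F_def)
  ultimately show ?thesis using s by blast
qed


theorem corollary2:
  fixes M :: "('s, 'a :: finite, 'p :: countable) emodel" and s :: 's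
    and N :: "('w, 'a, 'p) emodel" and t :: 'w
    and \<phi> :: "('a, 'p) fm"
  assumes "is_model M" and "finite (dom M)" and "s \<in> dom M"
    and "wf_fm \<phi>"
    and "is_model N" and "t \<in> dom N" and "holds N t \<phi>"
    and "\<exists>Sser \<subseteq> dom M. s \<in> Sser \<and>
           (\<forall>a \<in> agents_fm \<phi>. \<forall>x \<in> Sser. \<exists>u \<in> Sser. (x, u) \<in> rel M a)"
  shows "\<exists>E Rl pre post e. wf_act (Upd E Rl pre post e) \<and>
           holds M s (Dia (Upd E Rl pre post e) \<phi>)"
proof -
  obtain Sser where Ss: "Sser \<subseteq> dom M" "s \<in> Sser"
    "\<forall>a \<in> agents_fm \<phi>. \<forall>x \<in> Sser. \<exists>u \<in> Sser. (x, u) \<in> rel M a" using assms(8) by blast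
  define A where "A = agents_fm \<phi>"
  obtain as where as: "set as = A" using finite_list[of A] by auto
  obtain k where k: "Sser \<subseteq> {x \<in> dom M. sat (chi as k :: ('a, 'p) fm) (lift M) (x, [])}"
    "\<forall>x\<in>{x \<in> dom M. sat (chi as k :: ('a, 'p) fm) (lift M) (x, [])}. \<forall>a\<in>set as.
       \<exists>y\<in>{x \<in> dom M. sat (chi as k :: ('a, 'p) fm) (lift M) (x, [])}. (x, y) \<in> rel M a"
    using T_exists[OF assms(1) assms(2) Ss(1), of "as"] Ss(3) as A_def by auto
  define T where "T = {x \<in> dom M. sat (chi as k :: ('a, 'p) fm) (lift M) (x, [])}"
  have sT: "s \<in> T" using k(1) Ss(2) T_def by blast
  have Tser: "\<And>x a. x \<in> T \<Longrightarrow> a \<in> A \<Longrightarrow> \<exists>y\<in>T. (x, y) \<in> rel M a" using k(2) as T_def by blast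
  obtain F :: "((('a, 'p) fm set \<times> nat list), 'a, 'p) emodel" and z where
    F: "finite (dom F)" "z \<in> dom F" "\<forall>a. rel F a \<subseteq> dom F \<times> dom F" "sat \<phi> F z"
    using filtration_exists[OF assms(5) assms(6) assms(7) assms(4)] by blast
  obtain ds where ds: "distinct ds" "set ds = dom F" using finite_distinct_list[OF F(1)] by blast
  define n where "n = length ds"
  obtain e where e: "e < n" "ds ! e = z" using F(2) ds(2) by (metis in_set_conv_nth n_def)
  define E where "E = {..<n}"
  define Rl where "Rl a = (if a \<in> A then {(i, j). i < n \<and> j < n \<and> (ds ! i, ds ! j) \<in> rel F a} else {})" for a
  define pre where "pre = (\<lambda>f :: nat. chi as k :: ('a, 'p) fm)"
  define post :: "nat \<Rightarrow> 'p \<Rightarrow> ('a, 'p) fm" where "post = (\<lambda>(f :: nat) p. if p \<in> atf \<phi> then (if ds ! f \<in> val F p then tt else Neg tt) else Atom p)"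
  have fat: "finite (atf \<phi>)" using finite_atf[OF assms(4)] .
  have wfa: "wf_act (Upd E Rl pre post e)"
  proof -
    have "\<And>f. finite {p. post f p \<noteq> Atom p}"
      by (rule finite_subset[OF _ fat]) (auto simp: post_def)
    moreover have "\<And>f p. wf_fm (post f p)" by (simp add: post_def)
    ultimately show ?thesis using e by (auto simp: E_def Rl_def pre_def wf_chi)
  qed
  define P where "P = upd (lift M) E Rl (\<lambda>f. sat (pre f)) (\<lambda>f p. sat (post f p))"
  define g where "g w = ds ! last (snd w)" for w :: "'s \<times> nat list"
  have domP: "\<And>x m. (x, m) \<in> dom P \<Longrightarrow> m = [last m] \<and> x \<in> T \<and> last m < n"
  proof -
    fix x m assume "(x, m) \<in> dom P"
    then have "m \<noteq> []" "(x, butlast m) \<in> dom (lift M)" "last m \<in> E" "sat (pre (last m)) (lift M) (x, butlast m)"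
      by (auto simp: P_def upd_dom)
    then show "m = [last m] \<and> x \<in> T \<and> last m < n"
      by (auto simp: lift_def T_def pre_def E_def) (metis append_butlast_last_id append_Nil)
  qed
  have pmP: "PMOR A (atf \<phi>) P F g"
    unfolding PMOR_def
  proof (intro conjI ballI allI impI)
    fix w assume w: "w \<in> dom P"
    obtain x m where xm: "w = (x, m)" by (cases w)
    have "last m < length ds" using domP[of x m] w by (simp add: xm n_def)
    then have "ds ! last m \<in> set ds" by simp
    then show "g w \<in> dom F" using ds(2) by (simp add: xm g_def)
  next
    fix a show "rel P a \<subseteq> dom P \<times> dom P" unfolding P_def using upd_rel_dom by fast
  next
    fix a w v assume a: "a \<in> A" and wv: "(w, v) \<in> rel P a"
    obtain x m where xm: "w = (x, m)" by (cases w)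
    obtain y m' where ym: "v = (y, m')" by (cases v)
    from wv have "(last m, last m') \<in> Rl a" by (simp add: xm ym P_def upd_rel)
    then show "(g w, g v) \<in> rel F a" using a by (simp add: Rl_def g_def xm ym)
  next
    fix a w z' assume a: "a \<in> A" and w: "w \<in> dom P" and R: "(g w, z') \<in> rel F a"
    obtain x m where xm: "w = (x, m)" by (cases w)
    have wm: "m = [last m]" "x \<in> T" "last m < n" using domP[of x m] w xm by auto
    have "z' \<in> set ds" using R F(3) ds(2) by blast
    then obtain j where j: "j < n" "ds ! j = z'" by (metis in_set_conv_nth n_def)
    obtain y where y: "y \<in> T" "(x, y) \<in> rel M a" using Tser[OF wm(2) a] by blast
    have yd: "y \<in> dom M" using y(1) by (simp add: T_def)
    have vd: "(y, [j]) \<in> dom P" using yd y(1) j(1)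
      by (simp add: P_def upd_dom lift_def E_def pre_def T_def)
    have bl: "butlast m = []" using wm(1) by (metis butlast.simps(2))
    have r1: "((x, butlast m), (y, butlast [j])) \<in> rel (lift M) a" using y(2) bl by (simp add: lift_def)
    have r2: "(last m, j) \<in> Rl a" using a wm(3) j R by (simp add: Rl_def g_def xm)
    have "((x, m), (y, [j])) \<in> rel P a"
      using vd w r1 r2 unfolding P_def xm by (simp only: upd_rel) simp
    then have "(w, (y, [j])) \<in> rel P a" by (simp add: xm)
    moreover have "g (y, [j]) = z'" using j by (simp add: g_def)
    ultimately show "\<exists>v. (w, v) \<in> rel P a \<and> g v = z'" by blast
  next
    fix p w assume p: "p \<in> atf \<phi>" and w: "w \<in> dom P"
    obtain x m where xm: "w = (x, m)" by (cases w)
    show "w \<in> val P p \<longleftrightarrow> g w \<in> val F p"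
      using w p by (simp add: xm P_def upd_val post_def g_def)
  qed
  have sd: "(s, [e]) \<in> dom P" using sT e(1)
    by (simp add: P_def upd_dom lift_def E_def pre_def T_def)
  have "sat \<phi> P (s, [e]) = sat \<phi> F (g (s, [e]))"
    by (rule pm[OF assms(4) _ _ pmP sd]) (auto simp: A_def)
  then have sP: "sat \<phi> P (s, [e])" using F(4) e(2) by (simp add: g_def)
  have "sat (pre e) (lift M) (s, [])" using sT by (simp add: pre_def T_def)
  then have "holds M s (Dia (Upd E Rl pre post e) \<phi>)"
    using sP by (simp add: holds_def Dia_def P_def)
  then show ?thesis using wfa by blast
qed

end
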